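(* Let $y\in\mathbb{R}^N$, $\lambda>0$ and $\alpha\geq 0$. Let $$F(x)=\|x\|_1-\alpha\|x\|_2+\frac{1}{2\lambda}\|x-y\|_2^2,$$ and let $x^*$ be any minimizer of $F$ over $\mathbb{R}^N$. Then for every $x\in\mathbb{R}^N$, $$F(x^* )-F(x)\leq \min\left(\frac{\alpha}{2\|x^*\|_2}-\frac{1}{2\lambda},\,0\right)\|x^*-x\|_2^2,$$ where, when $x^*=0$, the quantity $\alpha/0$ is interpreted as $0$ if $\alpha=0$ and as $+\infty$ if $\alpha>0$. *)

theory Defs
  imports "HOL-Analysis.Analysis"
begin

text \<open>The l1 norm of a vector in R^N (index type 'n finite, N = CARD('n)).\<close>
definition l1norm :: "real ^ 'n \<Rightarrow> real" where
  "l1norm x = (\<Sum>i\<in>UNIV. \<bar>x $ i\<bar>)"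

definition Fobj :: "real \<Rightarrow> real \<Rightarrow> real ^ 'n \<Rightarrow> real ^ 'n \<Rightarrow> real" where
  "Fobj alpha lambda y x = l1norm x - alpha * norm x + (1 / (2 * lambda)) * (norm (x - y))\<^sup>2"

end

theory Submission
  imports Defs
begin

lemma sq_comb:
  fixes a b :: "'a::real_inner"
  shows "(norm ((1-t) *\<^sub>R a + t *\<^sub>R b))\<^sup>2 = (1-t)*(norm a)\<^sup>2 + t*(norm b)\<^sup>2 - t*(1-t)*(norm (a-b))\<^sup>2"
  unfolding power2_norm_eq_inner
  by (simp add: inner_diff_left inner_diff_right inner_add_left inner_add_right
      inner_commute algebra_simps)

lemma strong_min:
  fixes H :: "'a::real_inner \<Rightarrow> real"
  assumes conv: "\<And>a b t. 0\<le>t \<Longrightarrow> t\<le>1 \<Longrightarrow> H ((1-t) *\<^sub>R a + t *\<^sub>R b) \<le> (1-t)*H a + t*H b"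
    and c: "c \<ge> 0"
    and mn: "\<forall>z. H xs + c*(norm (xs-y))\<^sup>2 \<le> H z + c*(norm (z-y))\<^sup>2"
  shows "H xs + c*(norm (xs-y))\<^sup>2 + c*(norm (x-xs))\<^sup>2 \<le> H x + c*(norm (x-y))\<^sup>2"
proof -
  define G where "G z = H z + c*(norm (z-y))\<^sup>2" for z
  define K where "K = c*(norm (x-xs))\<^sup>2"
  have K0: "K \<ge> 0" using c by (simp add: K_def)
  have step: "G xs \<le> G x - K + t*K" if t: "0<t" "t\<le>1" for t
  proof -
    have e: "(1-t) *\<^sub>R xs + t *\<^sub>R x - y = (1-t) *\<^sub>R (xs - y) + t *\<^sub>R (x - y)"
      by (simp add: algebra_simps)
    have "G xs \<le> G ((1-t) *\<^sub>R xs + t *\<^sub>R x)" using mn by (simp add: G_def)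
    also have "\<dots> \<le> (1-t)*H xs + t*H x + c*((1-t)*(norm (xs-y))\<^sup>2 + t*(norm (x-y))\<^sup>2 - t*(1-t)*(norm (x-xs))\<^sup>2)"
    proof -
      have "(norm (xs - y - (x - y)))\<^sup>2 = (norm (x-xs))\<^sup>2"
        by (metis norm_minus_commute diff_diff_eq2 diff_add_cancel add_diff_cancel_right)
      then show ?thesis
        unfolding G_def e sq_comb using conv[of t xs x] t by simp
    qed
    also have "\<dots> = (1-t)*G xs + t*G x - t*(1-t)*K" by (simp add: G_def K_def algebra_simps)
    finally have "t * G xs \<le> t * (G x - K + t*K)" by (simp add: algebra_simps)
    then show ?thesis using t by simp
  qed
  have "G xs \<le> G x - K"
  proof (rule ccontr)
    assume "\<not> ?thesis"
    then have d: "G xs - (G x - K) > 0" by simp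
    show False
    proof (cases "K = 0")
      case True then show False using step[of 1] d by simp
    next
      case False
      then have Kp: "K > 0" using K0 by simp
      define t where "t = min 1 ((G xs - (G x - K)) / (2*K))"
      have t0: "t > 0" using d Kp by (simp add: t_def)
      have t1: "t \<le> 1" by (simp add: t_def)
      have "t \<le> (G xs - (G x - K)) / (2*K)" by (simp add: t_def)
      then have "t*K \<le> (G xs - (G x - K)) / (2*K) * K" by (rule mult_right_mono) (use Kp in linarith)
      also have "\<dots> = (G xs - (G x - K))/2" using Kp by simp
      finally show False using step[OF t0 t1] d by simp
    qed
  qed
  then show ?thesis by (simp add: G_def K_def)
qed

lemma l1_conv:
  fixes a b :: "real ^ 'n"
  assumes "0\<le>t" "t\<le>1"
  shows "l1norm ((1-t) *\<^sub>R a + t *\<^sub>R b) \<le> (1-t)*l1norm a + t*l1norm b"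
proof -
  have "l1norm ((1-t) *\<^sub>R a + t *\<^sub>R b) = (\<Sum>i\<in>UNIV. \<bar>(1-t) * a$i + t * b$i\<bar>)"
    by (simp add: l1norm_def)
  also have "\<dots> \<le> (\<Sum>i\<in>UNIV. (1-t) * \<bar>a$i\<bar> + t * \<bar>b$i\<bar>)"
  proof (rule sum_mono)
    fix i
    have "\<bar>(1-t) * a$i + t * b$i\<bar> \<le> \<bar>(1-t) * a$i\<bar> + \<bar>t * b$i\<bar>" by (rule abs_triangle_ineq)
    also have "\<dots> = (1-t) * \<bar>a$i\<bar> + t * \<bar>b$i\<bar>" using assms by (simp add: abs_mult)
    finally show "\<bar>(1-t) * a$i + t * b$i\<bar> \<le> (1-t) * \<bar>a$i\<bar> + t * \<bar>b$i\<bar>" .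
  qed
  also have "\<dots> = (1-t)*l1norm a + t*l1norm b"
    by (simp add: l1norm_def sum.distrib sum_distrib_left)
  finally show ?thesis .
qed

lemma norm_lin_bound:
  fixes xs x :: "'a::real_inner"
  assumes "xs \<noteq> 0"
  shows "norm x - inner (xs /\<^sub>R norm xs) x \<le> (norm (xs - x))\<^sup>2 / (2 * norm xs)"
proof -
  have p: "norm xs > 0" using assms by simp
  have "(norm (xs - x))\<^sup>2 = (norm xs)\<^sup>2 - 2 * inner xs x + (norm x)\<^sup>2"
    by (simp add: power2_norm_eq_inner inner_diff_left inner_diff_right inner_commute algebra_simps)
  moreover have "0 \<le> (norm x - norm xs)\<^sup>2" by simp
  ultimately have h: "2 * norm xs * norm x - 2 * inner xs x \<le> (norm (xs - x))\<^sup>2"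
    by (simp add: algebra_simps power2_eq_square)
  have "norm x - inner (xs /\<^sub>R norm xs) x = (2 * norm xs * norm x - 2 * inner xs x) / (2 * norm xs)"
    using p by (simp add: field_simps)
  also have "\<dots> \<le> (norm (xs - x))\<^sup>2 / (2 * norm xs)"
    by (rule divide_right_mono[OF h]) (use p in simp)
  finally show ?thesis .
qed

theorem lemma2:
  fixes y xs :: "real ^ 'n" and lambda alpha :: real
  assumes "lambda > 0" and "alpha \<ge> 0"
    and "\<forall>z. Fobj alpha lambda y xs \<le> Fobj alpha lambda y z"
  shows "\<forall>x. Fobj alpha lambda y xs - Fobj alpha lambda y x
           \<le> (if xs = 0 \<and> alpha > 0 then 0
               else min (alpha / (2 * norm xs) - 1 / (2 * lambda)) 0) * (norm (xs - x))\<^sup>2"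
proof
  fix x
  let ?F = "Fobj alpha lambda y"
  define c where "c = 1 / (2*lambda)"
  have c0: "c > 0" using assms(1) by (simp add: c_def)
  have Fmin: "?F xs - ?F x \<le> 0" using assms(3) by simp
  show "?F xs - ?F x \<le> (if xs = 0 \<and> alpha > 0 then 0
               else min (alpha / (2 * norm xs) - 1 / (2 * lambda)) 0) * (norm (xs - x))\<^sup>2"
  proof (cases "xs = 0")
    case True
    show ?thesis
    proof (cases "alpha > 0")
      case True with \<open>xs = 0\<close> Fmin show ?thesis by simp
    next
      case False
      then have a0: "alpha = 0" using assms(2) by simp
      have F: "?F z = l1norm z + c*(norm (z-y))\<^sup>2" for z by (simp add: Fobj_def a0 c_def)
      have "l1norm xs + c*(norm (xs-y))\<^sup>2 + c*(norm (x-xs))\<^sup>2 \<le> l1norm x + c*(norm (x-y))\<^sup>2"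
        by (rule strong_min[where H=l1norm]) (use l1_conv c0 assms(3) F in auto)
      then have "?F xs - ?F x \<le> - c * (norm (xs - x))\<^sup>2" unfolding F by (simp add: norm_minus_commute)
      then show ?thesis using \<open>xs = 0\<close> a0 c0 by (simp add: c_def min_def)
    qed
  next
    case False
    define u where "u = xs /\<^sub>R norm xs"
    define H where "H z = l1norm z - alpha * inner u z" for z
    have Hc: "H ((1-t) *\<^sub>R a + t *\<^sub>R b) \<le> (1-t)*H a + t*H b" if "0\<le>t" "t\<le>1" for a b t
      using l1_conv[OF that, of a b] by (simp add: H_def inner_add_right algebra_simps)
    have cs: "inner u z \<le> norm z" for z
    proof -
      have "inner u z \<le> norm u * norm z" by (rule norm_cauchy_schwarz)
      also have "norm u \<le> 1" using False by (simp add: u_def)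
      then have "norm u * norm z \<le> norm z" by (simp add: mult_left_le_one_le)
      finally show ?thesis .
    qed
    have uxs: "inner u xs = norm xs" using False by (simp add: u_def power2_norm_eq_inner[symmetric] power2_eq_square)
    have FG: "?F z \<le> H z + c*(norm (z-y))\<^sup>2" for z
      using cs[of z] assms(2) by (simp add: Fobj_def H_def c_def mult_left_mono)
    have FGxs: "?F xs = H xs + c*(norm (xs-y))\<^sup>2"
      by (simp add: Fobj_def H_def c_def uxs)
    have mn: "\<forall>z. H xs + c*(norm (xs-y))\<^sup>2 \<le> H z + c*(norm (z-y))\<^sup>2"
      using FG FGxs assms(3) by (metis order_trans)
    have sm: "H xs + c*(norm (xs-y))\<^sup>2 + c*(norm (x-xs))\<^sup>2 \<le> H x + c*(norm (x-y))\<^sup>2"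
      by (rule strong_min[OF Hc _ mn]) (use c0 in auto)
    have Fx: "?F x = H x + c*(norm (x-y))\<^sup>2 - alpha * (norm x - inner u x)"
      by (simp add: Fobj_def H_def c_def algebra_simps)
    have nb: "alpha * (norm x - inner u x) \<le> alpha * ((norm (xs - x))\<^sup>2 / (2 * norm xs))"
      using norm_lin_bound[OF False, of x] assms(2) unfolding u_def by (rule mult_left_mono)
    have "?F xs - ?F x \<le> alpha * ((norm (xs - x))\<^sup>2 / (2 * norm xs)) - c*(norm (xs - x))\<^sup>2"
      using sm nb unfolding FGxs Fx by (simp add: norm_minus_commute)
    also have "\<dots> = (alpha / (2 * norm xs) - 1 / (2 * lambda)) * (norm (xs - x))\<^sup>2"
      by (simp add: c_def algebra_simps)
    finally have A: "?F xs - ?F x \<le> (alpha / (2 * norm xs) - 1 / (2 * lambda)) * (norm (xs - x))\<^sup>2" .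
    have "?F xs - ?F x \<le> min (alpha / (2 * norm xs) - 1 / (2 * lambda)) 0 * (norm (xs - x))\<^sup>2"
      using A Fmin by (simp add: min_def)
    then show ?thesis using False by simp
  qed
qed

end
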